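(* Let $F,K\ge1$ and $0\le Z<F$ be integers such that $\frac{K(F-Z)}{Z+1}$ is an integer, and suppose an RPDA$(F,K,Z)$ exists. Then an RPDA$(F,\ell K,Z)$ exists for every integer $\ell\ge1$.
   Context: A placement delivery array $S$-PDA$(F,K,Z)$ is an $F\times K$ array $R=(r_{j,k})$, $1\le j\le F$, $1\le k\le K$, over a finite set $S$ such that: (1) each cell is either empty or contains an element of $S$; (2) each column contains exactly $Z$ empty cells; (3) each element of $S$ occurs at most once in each row and at most once in each column; (4) if two distinct nonempty cells satisfy $r_{j_1,k_1}=r_{j_2,k_2}=t\in S$, then the cells $r_{j_1,k_2}$ and $r_{j_2,k_1}$ are empty. An RPDA$(F,K,Z)$ (restricted PDA) is an $S$-PDA$(F,K,Z)$ with $|S|=\left\lceil\frac{K(F-Z)}{Z+1}\right\rceil$. *)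

theory Defs
  imports Complex_Main
begin

text \<open>An F x K array over S is modelled as R :: nat => nat => 'a option, with rows
  0..<F and columns 0..<K; None is an empty cell, Some s a cell containing s.
  Values outside the index range are irrelevant.\<close>

definition is_PDA :: "'a set \<Rightarrow> nat \<Rightarrow> nat \<Rightarrow> nat \<Rightarrow> (nat \<Rightarrow> nat \<Rightarrow> 'a option) \<Rightarrow> bool" where
  "is_PDA S F K Z R \<longleftrightarrow>
     finite S \<and>
     (\<forall>j<F. \<forall>k<K. R j k = None \<or> (\<exists>s\<in>S. R j k = Some s)) \<and>
     (\<forall>k<K. card {j. j < F \<and> R j k = None} = Z) \<and>
     (\<forall>t\<in>S. \<forall>j<F. \<forall>k1<K. \<forall>k2<K. R j k1 = Some t \<and> R j k2 = Some t \<longrightarrow> k1 = k2) \<and>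
     (\<forall>t\<in>S. \<forall>k<K. \<forall>j1<F. \<forall>j2<F. R j1 k = Some t \<and> R j2 k = Some t \<longrightarrow> j1 = j2) \<and>
     (\<forall>t\<in>S. \<forall>j1<F. \<forall>j2<F. \<forall>k1<K. \<forall>k2<K.
        R j1 k1 = Some t \<and> R j2 k2 = Some t \<and> (j1, k1) \<noteq> (j2, k2) \<longrightarrow>
        R j1 k2 = None \<and> R j2 k1 = None)"

definition is_RPDA :: "'a set \<Rightarrow> nat \<Rightarrow> nat \<Rightarrow> nat \<Rightarrow> (nat \<Rightarrow> nat \<Rightarrow> 'a option) \<Rightarrow> bool" where
  "is_RPDA S F K Z R \<longleftrightarrow>
     is_PDA S F K Z R \<and>
     card S = nat \<lceil>real (K * (F - Z)) / real (Z + 1)\<rceil>"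

end

theory Submission
  imports Defs
begin

lemma enc_inj: "c1 < (l::nat) \<Longrightarrow> c2 < l \<Longrightarrow> l*s1 + c1 = l*s2 + c2 \<Longrightarrow> c1 = c2 \<and> s1 = s2"
proof -
  assume a: "c1 < l" "c2 < l" "l*s1 + c1 = l*s2 + c2"
  have e1: "c1 = (l*s1 + c1) mod l" "s1 = (l*s1 + c1) div l" using a(1) by simp_all
  have e2: "c2 = (l*s2 + c2) mod l" "s2 = (l*s2 + c2) div l" using a(2) by simp_all
  have "c1 = c2" using e1(1) e2(1) a(3) by simp
  moreover have "s1 = s2" using e1(2) e2(2) a(3) by simp
  ultimately show ?thesis by simp
qed

lemma copy_PDA:
  fixes R :: "nat \<Rightarrow> nat \<Rightarrow> nat option"
  assumes P: "is_PDA S F K Z R" and l: "l \<ge> 1" and K: "K \<ge> 1"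
  shows "is_PDA ((\<lambda>(c,s). l*s+c) ` ({..<l} \<times> S)) F (l*K) Z
           (\<lambda>j k. map_option (\<lambda>s. l*s + k div K) (R j (k mod K)))"
    (is "is_PDA ?S F (l*K) Z ?R")
proof -
  have km: "\<And>k. k < l*K \<Longrightarrow> k mod K < K \<and> k div K < l"
    using K by (auto simp: less_mult_imp_div_less mult.commute)
  have keq: "\<And>k1 k2. k1 div K = k2 div K \<Longrightarrow> k1 mod K = k2 mod K \<Longrightarrow> k1 = k2"
    by (metis div_mult_mod_eq)
  note defs = P[unfolded is_PDA_def]
  note X4 = defs[THEN conjunct2, THEN conjunct2, THEN conjunct2, THEN conjunct1]
  note X5 = defs[THEN conjunct2, THEN conjunct2, THEN conjunct2, THEN conjunct2, THEN conjunct1]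
  note X6 = defs[THEN conjunct2, THEN conjunct2, THEN conjunct2, THEN conjunct2, THEN conjunct2]
  have D2: "\<And>j k s. j < F \<Longrightarrow> k < K \<Longrightarrow> R j k = Some s \<Longrightarrow> s \<in> S"
    using defs by (metis option.distinct(1) option.inject)
  have D4: "\<And>t j k1 k2. t \<in> S \<Longrightarrow> j < F \<Longrightarrow> k1 < K \<Longrightarrow> k2 < K \<Longrightarrow> R j k1 = Some t \<Longrightarrow> R j k2 = Some t \<Longrightarrow> k1 = k2"
    using X4 by blast
  have D5: "\<And>t k j1 j2. t \<in> S \<Longrightarrow> k < K \<Longrightarrow> j1 < F \<Longrightarrow> j2 < F \<Longrightarrow> R j1 k = Some t \<Longrightarrow> R j2 k = Some t \<Longrightarrow> j1 = j2"
    using X5 by blast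
  have D6: "\<And>t j1 j2 k1 k2. t \<in> S \<Longrightarrow> j1 < F \<Longrightarrow> j2 < F \<Longrightarrow> k1 < K \<Longrightarrow> k2 < K \<Longrightarrow> R j1 k1 = Some t \<Longrightarrow> R j2 k2 = Some t \<Longrightarrow> (j1, k1) \<noteq> (j2, k2) \<Longrightarrow> R j1 k2 = None \<and> R j2 k1 = None"
    using X6 by blast
  have 1: "finite ?S" using defs by auto
  have 2: "\<forall>j<F. \<forall>k<l*K. ?R j k = None \<or> (\<exists>s\<in>?S. ?R j k = Some s)"
  proof (intro allI impI)
    fix j k assume jk: "j < F" "k < l*K"
    show "?R j k = None \<or> (\<exists>s\<in>?S. ?R j k = Some s)"
    proof (cases "R j (k mod K)")
      case (Some s)
      have "s \<in> S" using D2 jk km Some by blast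
      hence "(k div K, s) \<in> {..<l} \<times> S" using km[OF jk(2)] by simp
      hence "(\<lambda>(c,s). l*s+c) (k div K, s) \<in> ?S" by (rule imageI)
      hence "l*s + k div K \<in> ?S" by simp
      thus ?thesis using Some by simp
    qed simp
  qed
  have 3: "\<forall>k<l*K. card {j. j < F \<and> ?R j k = None} = Z"
  proof (intro allI impI)
    fix k assume k: "k < l*K"
    have X3: "\<forall>k<K. card {j. j < F \<and> R j k = None} = Z" using defs by (elim conjE)
    have "card {j. j < F \<and> R j (k mod K) = None} = Z" using X3 km[OF k] by blast
    thus "card {j. j < F \<and> ?R j k = None} = Z" by simp
  qed
  have 4: "\<forall>t\<in>?S. \<forall>j<F. \<forall>k1<l*K. \<forall>k2<l*K. ?R j k1 = Some t \<and> ?R j k2 = Some t \<longrightarrow> k1 = k2"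
  proof (intro ballI allI impI)
    fix t j k1 k2 assume t: "t \<in> ?S" and j: "j < F" and k: "k1 < l*K" "k2 < l*K"
      and e: "?R j k1 = Some t \<and> ?R j k2 = Some t"
    then obtain s1 s2 where s: "R j (k1 mod K) = Some s1" "R j (k2 mod K) = Some s2"
      "l*s1 + k1 div K = t" "l*s2 + k2 div K = t" by auto
    have m1: "k1 mod K < K" "k1 div K < l" using km[OF k(1)] by auto
    have m2: "k2 mod K < K" "k2 div K < l" using km[OF k(2)] by auto
    have eq: "s1 = s2 \<and> k1 div K = k2 div K" using enc_inj[OF m1(2) m2(2)] s(3,4) by metis
    have "s1 \<in> S" using D2[OF j m1(1) s(1)] .
    hence "k1 mod K = k2 mod K" using D4[OF _ j m1(1) m2(1) s(1)] s(2) eq by blast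
    thus "k1 = k2" using keq eq by blast
  qed
  have 5: "\<forall>t\<in>?S. \<forall>k<l*K. \<forall>j1<F. \<forall>j2<F. ?R j1 k = Some t \<and> ?R j2 k = Some t \<longrightarrow> j1 = j2"
  proof (intro ballI allI impI)
    fix t k j1 j2 assume t: "t \<in> ?S" and k: "k < l*K" and j: "j1 < F" "j2 < F"
      and e: "?R j1 k = Some t \<and> ?R j2 k = Some t"
    then obtain s1 s2 where s: "R j1 (k mod K) = Some s1" "R j2 (k mod K) = Some s2"
      "l*s1 + k div K = t" "l*s2 + k div K = t" by auto
    have m: "k mod K < K" "k div K < l" using km[OF k] by auto
    have eq: "s1 = s2" using enc_inj[OF m(2) m(2)] s(3,4) by metis
    have "s1 \<in> S" using D2[OF j(1) m(1) s(1)] .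
    thus "j1 = j2" using D5[OF _ m(1) j s(1)] s(2) eq by blast
  qed
  have 6: "\<forall>t\<in>?S. \<forall>j1<F. \<forall>j2<F. \<forall>k1<l*K. \<forall>k2<l*K.
        ?R j1 k1 = Some t \<and> ?R j2 k2 = Some t \<and> (j1, k1) \<noteq> (j2, k2) \<longrightarrow>
        ?R j1 k2 = None \<and> ?R j2 k1 = None"
  proof (intro ballI allI impI)
    fix t j1 j2 k1 k2 assume t: "t \<in> ?S" and j: "j1 < F" "j2 < F" and k: "k1 < l*K" "k2 < l*K"
      and e: "?R j1 k1 = Some t \<and> ?R j2 k2 = Some t \<and> (j1, k1) \<noteq> (j2, k2)"
    have e1: "?R j1 k1 = Some t" and e2: "?R j2 k2 = Some t" and e3: "(j1, k1) \<noteq> (j2, k2)"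
      using e by blast+
    obtain s1 where s1: "R j1 (k1 mod K) = Some s1" "l*s1 + k1 div K = t"
      using e1 by (cases "R j1 (k1 mod K)") auto
    obtain s2 where s2: "R j2 (k2 mod K) = Some s2" "l*s2 + k2 div K = t"
      using e2 by (cases "R j2 (k2 mod K)") auto
    note s = s1(1) s2(1) s1(2) s2(2)
    have m1: "k1 mod K < K" "k1 div K < l" using km[OF k(1)] by auto
    have m2: "k2 mod K < K" "k2 div K < l" using km[OF k(2)] by auto
    have eq: "s1 = s2 \<and> k1 div K = k2 div K" using enc_inj[OF m1(2) m2(2)] s(3,4) by metis
    have "s1 \<in> S" using D2[OF j(1) m1(1) s(1)] .
    moreover have "(j1, k1 mod K) \<noteq> (j2, k2 mod K)"
    proof
      assume "(j1, k1 mod K) = (j2, k2 mod K)"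
      hence "j1 = j2" "k1 mod K = k2 mod K" by simp_all
      moreover have "k1 = k2" using keq eq calculation(2) by blast
      ultimately show False using e3 by simp
    qed
    ultimately have "R j1 (k2 mod K) = None \<and> R j2 (k1 mod K) = None"
      using D6[OF _ j m1(1) m2(1) s(1)] s(2) eq by blast
    thus "?R j1 k2 = None \<and> ?R j2 k1 = None" by simp
  qed
  show ?thesis unfolding is_PDA_def using 1 2 3 4 5 6 by blast
qed

lemma ceil_dvd: "(Z+1) dvd (m::nat) \<Longrightarrow> nat \<lceil>real m / real (Z + 1)\<rceil> = m div (Z+1)"
proof -
  assume "(Z+1) dvd m"
  then obtain q where q: "m = (Z+1)*q" by blast
  have "real m / real (Z + 1) = real q" proof -
    have h: "real (Z+1) \<noteq> 0" by simp
    have "real m = real (Z+1) * real q" unfolding q by (simp only: of_nat_mult)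
    thus ?thesis using h by simp
  qed
  moreover have "m div (Z+1) = q" unfolding q by (metis add_gr_0 less_one nonzero_mult_div_cancel_left not_gr_zero)
  ultimately show ?thesis by simp
qed

theorem mainTheorem7:
  fixes F K Z :: nat
  assumes "F \<ge> 1" and "K \<ge> 1" and "Z < F"
    and "(Z + 1) dvd K * (F - Z)"
    and "\<exists>(S :: nat set) R. is_RPDA S F K Z R"
  shows "\<forall>l::nat. l \<ge> 1 \<longrightarrow> (\<exists>(S :: nat set) R. is_RPDA S F (l * K) Z R)"
proof (intro allI impI)
  fix l :: nat assume l: "l \<ge> 1"
  obtain S :: "nat set" and R where r: "is_RPDA S F K Z R" using assms(5) by blast
  hence P: "is_PDA S F K Z R" and c: "card S = K*(F-Z) div (Z+1)"
    unfolding is_RPDA_def using ceil_dvd[OF assms(4)] by auto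
  let ?S = "(\<lambda>(c,s). l*s+c) ` ({..<l} \<times> S)"
  have fin: "finite S" using P unfolding is_PDA_def by auto
  have inj: "inj_on (\<lambda>(c,s). l*s+c) ({..<l} \<times> S)"
  proof (rule inj_onI)
    fix x y assume "x \<in> {..<l} \<times> S" "y \<in> {..<l} \<times> S" "(\<lambda>(c,s). l*s+c) x = (\<lambda>(c,s). l*s+c) y"
    moreover obtain c1 s1 where "x = (c1, s1)" by fastforce
    moreover obtain c2 s2 where "y = (c2, s2)" by fastforce
    ultimately show "x = y" using enc_inj[of c1 l c2 s1 s2] by simp
  qed
  have "card ?S = l * card S" using card_image[OF inj] fin by (simp add: card_cartesian_product)
  also have "\<dots> = (l*K)*(F-Z) div (Z+1)" unfolding c
    using div_mult_swap[OF assms(4), of l] by (simp add: mult.assoc)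
  also have "\<dots> = nat \<lceil>real ((l*K)*(F-Z)) / real (Z + 1)\<rceil>"
    using ceil_dvd[of Z "(l*K)*(F-Z)"] assms(4) by (simp add: mult.assoc)
  finally have cc: "card ?S = nat \<lceil>real ((l*K)*(F-Z)) / real (Z + 1)\<rceil>" .
  have "is_RPDA ?S F (l*K) Z (\<lambda>j k. map_option (\<lambda>s. l*s + k div K) (R j (k mod K)))"
    unfolding is_RPDA_def using copy_PDA[OF P l assms(2)] cc by (rule conjI)
  thus "\<exists>(S :: nat set) R. is_RPDA S F (l * K) Z R" by blast
qed

end
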